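(* Let $M$ be a Hausdorff space. (a) Every continuous function $f:M\to\mathbb{R}$ induces a continuous spectral family $\sigma_f:\mathbb{R}\to\mathcal{T}(M)$ by $\sigma_f(\lambda):=\mathrm{int}(f^{-1}(]-\infty,\lambda]))$; its admissible domain $\mathcal{D}(\sigma_f)$ equals $M$, and $f_{\sigma_f}=f$. (b) Conversely, if $\sigma:\mathbb{R}\to\mathcal{T}(M)$ is a continuous spectral family, then the induced function $f_\sigma:\mathcal{D}(\sigma)\to\mathbb{R}$ is continuous, and the spectral family $\sigma_{f_\sigma}$ in $\mathcal{T}(\mathcal{D}(\sigma))$ it induces satisfies $\sigma_{f_\sigma}(\lambda)=\sigma(\lambda)\cap\mathcal{D}(\sigma)$ for all $\lambda\in\mathbb{R}$.
   Context: $\mathcal{T}(M)$ is the complete lattice of open subsets of $M$ with $\bigvee_k U_k=\bigcup_k U_k$ and $\bigwedge_k U_k=\mathrm{int}(\bigcap_k U_k)$. A spectral family in $\mathcal{T}(M)$ is a map $\sigma:\mathbb{R}\to\mathcal{T}(M)$ with $\sigma(\lambda)\subseteq\sigma(\mu)$ for $\lambda\le\mu$, $\sigma(\lambda)=\mathrm{int}\bigcap_{\mu>\lambda}\sigma(\mu)$ for all $\lambda$, $\mathrm{int}\bigcap_\lambda\sigma(\lambda)=\emptyset$ and $\bigcup_\lambda\sigma(\lambda)=M$. It is continuous if $\overline{\sigma(\lambda)}\subseteq\sigma(\mu)$ whenever $\lambda<\mu$. The admissible domain is $\mathcal{D}(\sigma):=M\setminus\bigcap_{\lambda}\sigma(\lambda)$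 and the induced function is $f_\sigma(x):=\inf\{\lambda : x\in\sigma(\lambda)\}$ for $x\in\mathcal{D}(\sigma)$; for a function $g$ on a space $N$, $\sigma_g(\lambda):=\mathrm{int}(g^{-1}(]-\infty,\lambda]))$ in $\mathcal{T}(N)$. *)

theory Defs
  imports "HOL-Analysis.Analysis"
begin

text \<open>Spectral families in the lattice of open subsets of a topological space X.
  Meets in T(M) are interiors of intersections.\<close>

definition spectral_family :: "'a topology \<Rightarrow> (real \<Rightarrow> 'a set) \<Rightarrow> bool" where
  "spectral_family X \<sigma> \<longleftrightarrow>
     (\<forall>l. openin X (\<sigma> l)) \<and>
     (\<forall>l m. l \<le> m \<longrightarrow> \<sigma> l \<subseteq> \<sigma> m) \<and>
     (\<forall>l. \<sigma> l = X interior_of (\<Inter>m\<in>{l<..}. \<sigma> m)) \<and>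
     X interior_of (\<Inter>l. \<sigma> l) = {} \<and>
     (\<Union>l. \<sigma> l) = topspace X"

definition continuous_spectral_family :: "'a topology \<Rightarrow> (real \<Rightarrow> 'a set) \<Rightarrow> bool" where
  "continuous_spectral_family X \<sigma> \<longleftrightarrow>
     spectral_family X \<sigma> \<and> (\<forall>l m. l < m \<longrightarrow> X closure_of (\<sigma> l) \<subseteq> \<sigma> m)"

definition admissible_domain :: "'a topology \<Rightarrow> (real \<Rightarrow> 'a set) \<Rightarrow> 'a set" where
  "admissible_domain X \<sigma> = topspace X - (\<Inter>l. \<sigma> l)"

definition induced_function :: "(real \<Rightarrow> 'a set) \<Rightarrow> 'a \<Rightarrow> real" where
  "induced_function \<sigma> x = Inf {l. x \<in> \<sigma> l}"

definition spectral_family_of :: "'a topology \<Rightarrow> ('a \<Rightarrow> real) \<Rightarrow> real \<Rightarrow> 'a set" where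
  "spectral_family_of X g l = X interior_of {x \<in> topspace X. g x \<le> l}"

end

theory Submission
  imports Defs
begin


lemma partA:
  assumes f: "continuous_map X euclideanreal f"
  shows "continuous_spectral_family X (spectral_family_of X f) \<and>
            admissible_domain X (spectral_family_of X f) = topspace X \<and>
            (\<forall>x\<in>topspace X. induced_function (spectral_family_of X f) x = f x)"
proof -
  define S where "S = spectral_family_of X f"
  have Sdef: "S l = X interior_of {x\<in>topspace X. f x \<le> l}" for l
    by (simp add: S_def spectral_family_of_def)
  have oplt: "openin X {x\<in>topspace X. f x < l}" for l
    using openin_continuous_map_preimage[OF f, of "{..<l}"] by simp
  have clle: "closedin X {x\<in>topspace X. f x \<le> l}" for l
    using closedin_continuous_map_preimage[OF f, of "{..l}"] by simp
  have memS: "x \<in> S l" if "x \<in> topspace X" "f x < l" for x l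
  proof -
    have "{x\<in>topspace X. f x < l} \<subseteq> X interior_of {x\<in>topspace X. f x \<le> l}"
      by (rule interior_of_maximal[OF _ oplt]) auto
    thus ?thesis using that Sdef by auto
  qed
  have Ssub: "S l \<subseteq> {x\<in>topspace X. f x \<le> l}" for l
    using Sdef interior_of_subset by metis
  have mono: "S l \<subseteq> S m" if "l \<le> m" for l m
    unfolding Sdef using that by (intro interior_of_mono) auto
  have rc: "S l = X interior_of (\<Inter>m\<in>{l<..}. S m)" for l
  proof
    show "S l \<subseteq> X interior_of (\<Inter>m\<in>{l<..}. S m)"
    proof (rule interior_of_maximal)
      show "S l \<subseteq> (\<Inter>m\<in>{l<..}. S m)"
      proof (rule INT_greatest)
        fix m assume "m \<in> {l<..}" thus "S l \<subseteq> S m" by (intro mono) simp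
      qed
      show "openin X (S l)" by (simp add: Sdef)
    qed
    have "(\<Inter>m\<in>{l<..}. S m) \<subseteq> {x\<in>topspace X. f x \<le> l}"
    proof
      fix x assume x: "x \<in> (\<Inter>m\<in>{l<..}. S m)"
      hence "x \<in> S (l+1)" by auto
      hence tx: "x \<in> topspace X" using Ssub by blast
      have "f x \<le> l"
      proof (rule ccontr)
        assume "\<not> f x \<le> l"
        hence "(l + f x)/2 \<in> {l<..}" by auto
        hence "x \<in> S ((l + f x)/2)" using x by blast
        hence "f x \<le> (l + f x)/2" using Ssub by blast
        thus False using \<open>\<not> f x \<le> l\<close> by (simp add: field_simps)
      qed
      thus "x \<in> {x\<in>topspace X. f x \<le> l}" using tx by auto
    qed
    thus "X interior_of (\<Inter>m\<in>{l<..}. S m) \<subseteq> S l"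
      unfolding Sdef[of l] by (rule interior_of_mono)
  qed
  have inter: "(\<Inter>l. S l) = {}"
  proof -
    { fix x assume "x \<in> (\<Inter>l. S l)"
      hence "x \<in> S (f x - 1)" by blast
      hence "f x \<le> f x - 1" using Ssub by blast
      hence False by simp }
    thus ?thesis by blast
  qed
  have union: "(\<Union>l. S l) = topspace X"
  proof
    show "(\<Union>l. S l) \<subseteq> topspace X" using Ssub by blast
    show "topspace X \<subseteq> (\<Union>l. S l)"
    proof
      fix x assume "x \<in> topspace X"
      hence "x \<in> S (f x + 1)" by (intro memS) auto
      thus "x \<in> (\<Union>l. S l)" by blast
    qed
  qed
  have sf: "spectral_family X S"
    unfolding spectral_family_def
  proof (intro conjI allI impI)
    show "openin X (S l)" for l by (simp add: Sdef)
    show "S l \<subseteq> S m" if "l \<le> m" for l m using mono that by blast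
    show "S l = X interior_of (\<Inter>m\<in>{l<..}. S m)" for l by (rule rc)
    show "X interior_of (\<Inter>l. S l) = {}" using inter by simp
    show "(\<Union>l. S l) = topspace X" by (rule union)
  qed
  have cont: "X closure_of S l \<subseteq> S m" if "l < m" for l m
  proof -
    have "X closure_of S l \<subseteq> X closure_of {x\<in>topspace X. f x \<le> l}"
      by (rule closure_of_mono[OF Ssub])
    also have "\<dots> = {x\<in>topspace X. f x \<le> l}" by (rule closure_of_closedin[OF clle])
    also have "\<dots> \<subseteq> S m"
    proof
      fix y assume "y \<in> {x\<in>topspace X. f x \<le> l}"
      thus "y \<in> S m" using that by (intro memS) auto
    qed
    finally show ?thesis .
  qed
  have ind: "induced_function S x = f x" if x: "x \<in> topspace X" for x
  proof -
    have low: "f x \<le> l" if "x \<in> S l" for l using that Ssub by blast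
    have bdd: "bdd_below {l. x \<in> S l}" by (rule bdd_belowI[of _ "f x"]) (simp add: low)
    have ne: "{l. x \<in> S l} \<noteq> {}" using memS[OF x, of "f x + 1"] by auto
    have "f x \<le> Inf {l. x \<in> S l}" by (rule cInf_greatest[OF ne]) (simp add: low)
    moreover have "Inf {l. x \<in> S l} \<le> f x"
    proof (rule field_le_epsilon)
      fix e :: real assume "0 < e"
      thus "Inf {l. x \<in> S l} \<le> f x + e"
      proof (intro cInf_lower[OF _ bdd])
        show "f x + e \<in> {l. x \<in> S l}" using memS[OF x, of "f x + e"] \<open>0 < e\<close> by simp
      qed
    qed
    ultimately show ?thesis by (simp add: induced_function_def)
  qed
  show ?thesis
    unfolding S_def[symmetric] continuous_spectral_family_def admissible_domain_def
  proof (intro conjI)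
    show "spectral_family X S" by (rule sf)
    show "\<forall>l m. l < m \<longrightarrow> X closure_of S l \<subseteq> S m" using cont by blast
    show "topspace X - \<Inter> (range S) = topspace X" using inter by simp
    show "\<forall>x\<in>topspace X. induced_function S x = f x" using ind by blast
  qed
qed


lemma interior_of_subtopology_open:
  assumes "openin X D" "A \<subseteq> D"
  shows "subtopology X D interior_of A = X interior_of A"
  using assms unfolding interior_of_def
  by (auto simp: openin_open_subtopology[OF assms(1)])

lemma partB:
  assumes cs: "continuous_spectral_family X \<sigma>"
  shows "continuous_map (subtopology X (admissible_domain X \<sigma>)) euclideanreal
               (induced_function \<sigma>) \<and>
            spectral_family (subtopology X (admissible_domain X \<sigma>))
               (spectral_family_of (subtopology X (admissible_domain X \<sigma>)) (induced_function \<sigma>)) \<and>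
            (\<forall>l. spectral_family_of (subtopology X (admissible_domain X \<sigma>)) (induced_function \<sigma>) l
                  = \<sigma> l \<inter> admissible_domain X \<sigma>)"
proof -
  define D where "D = admissible_domain X \<sigma>"
  define f where "f = induced_function \<sigma>"
  define T where "T = subtopology X D"
  have sf: "spectral_family X \<sigma>" and cl: "\<And>l m. l < m \<Longrightarrow> X closure_of (\<sigma> l) \<subseteq> \<sigma> m"
    using cs by (auto simp: continuous_spectral_family_def)
  note sfd = sf[unfolded spectral_family_def]
  have op: "openin X (\<sigma> l)" for l using conjunct1[OF sfd] by (rule spec)
  have mono: "\<sigma> l \<subseteq> \<sigma> m" if "l \<le> m" for l m
    using conjunct1[OF conjunct2[OF sfd]] that by (elim allE impE)
  have rc: "\<sigma> l = X interior_of (\<Inter>m\<in>{l<..}. \<sigma> m)" for l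
    using conjunct1[OF conjunct2[OF conjunct2[OF sfd]]] by (rule spec)
  have un: "(\<Union>l. \<sigma> l) = topspace X" using conjunct2[OF conjunct2[OF conjunct2[OF conjunct2[OF sfd]]]] .
  have sub: "\<sigma> l \<subseteq> topspace X" for l using op openin_subset by blast
  have Ddef: "D = topspace X - (\<Inter>l. \<sigma> l)" by (simp add: D_def admissible_domain_def)
  have Dsub: "D \<subseteq> topspace X" using Ddef by blast
  have intcl: "(\<Inter>m\<in>A. \<sigma> m) = (\<Inter>m\<in>A. X closure_of \<sigma> m)"
    if A: "\<And>m. m \<in> A \<Longrightarrow> \<exists>m'\<in>A. m' < m" for A
  proof
    show "(\<Inter>m\<in>A. \<sigma> m) \<subseteq> (\<Inter>m\<in>A. X closure_of \<sigma> m)"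
      using closure_of_subset[OF sub] by blast
    show "(\<Inter>m\<in>A. X closure_of \<sigma> m) \<subseteq> (\<Inter>m\<in>A. \<sigma> m)"
    proof (rule INT_greatest)
      fix m assume "m \<in> A"
      then obtain m' where "m' \<in> A" "m' < m" using A by blast
      hence "(\<Inter>m\<in>A. X closure_of \<sigma> m) \<subseteq> X closure_of \<sigma> m'" by blast
      also have "\<dots> \<subseteq> \<sigma> m" by (rule cl) fact
      finally show "(\<Inter>m\<in>A. X closure_of \<sigma> m) \<subseteq> \<sigma> m" .
    qed
  qed
  have clint: "closedin X (\<Inter>m\<in>A. \<sigma> m)" if A: "\<And>m. m \<in> A \<Longrightarrow> \<exists>m'\<in>A. m' < m" "A \<noteq> {}" for A
  proof -
    have "closedin X (\<Inter>m\<in>A. X closure_of \<sigma> m)"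
      using A(2) by (intro closedin_Inter) auto
    thus ?thesis using intcl[OF A(1)] by simp
  qed
  have openD: "openin X D"
  proof -
    have "closedin X (\<Inter>m\<in>UNIV. \<sigma> m)"
      by (rule clint) (auto, metis lt_ex)
    thus ?thesis unfolding Ddef by (intro openin_diff) auto
  qed
  have topT: "topspace T = D" using Dsub by (auto simp: T_def)
  have opT: "openin T U \<longleftrightarrow> openin X U \<and> U \<subseteq> D" for U
    unfolding T_def by (rule openin_open_subtopology[OF openD])
  have bdd: "bdd_below {l. x \<in> \<sigma> l}" and ne: "{l. x \<in> \<sigma> l} \<noteq> {}" if x: "x \<in> D" for x
  proof -
    obtain l0 where l0: "x \<notin> \<sigma> l0" using x Ddef by blast
    show "bdd_below {l. x \<in> \<sigma> l}"
    proof (rule bdd_belowI[of _ l0])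
      fix l assume "l \<in> {l. x \<in> \<sigma> l}"
      thus "l0 \<le> l" using mono[of l l0] l0 by (cases "l \<le> l0") auto
    qed
    show "{l. x \<in> \<sigma> l} \<noteq> {}" using x Ddef un by blast
  qed
  have F1: "f x \<le> l" if "x \<in> D" "x \<in> \<sigma> l" for x l
    unfolding f_def induced_function_def using that bdd by (intro cInf_lower) auto
  have F2: "x \<in> \<sigma> l" if xD: "x \<in> D" and "f x < l" for x l
  proof -
    have "Inf {l. x \<in> \<sigma> l} < l" using that by (simp add: f_def induced_function_def)
    then obtain l' where "x \<in> \<sigma> l'" "l' < l"
      using cInf_less_iff[OF ne[OF xD] bdd[OF xD]] by auto
    thus ?thesis using mono[of l' l] by auto
  qed
  have Fle: "f x \<le> l \<longleftrightarrow> x \<in> (\<Inter>m\<in>{l<..}. \<sigma> m)" if x: "x \<in> D" for x l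
  proof
    assume "f x \<le> l" thus "x \<in> (\<Inter>m\<in>{l<..}. \<sigma> m)" using F2[OF x] by auto
  next
    assume a: "x \<in> (\<Inter>m\<in>{l<..}. \<sigma> m)"
    show "f x \<le> l"
    proof (rule ccontr)
      assume "\<not> f x \<le> l"
      hence "(l + f x)/2 \<in> {l<..}" by auto
      hence "f x \<le> (l + f x)/2" using a F1[OF x] by blast
      thus False using \<open>\<not> f x \<le> l\<close> by (simp add: field_simps)
    qed
  qed
  have dense: "\<exists>m'\<in>{l<..}. m' < m" if "m \<in> {l<..}" for l m :: real
    using that by (intro bexI[of _ "(l+m)/2"]) auto
  have contf: "continuous_map T euclideanreal f"
    unfolding continuous_map_upper_lower_semicontinuous_lt topT
  proof (intro conjI allI)
    fix a :: real
    have eq: "{x \<in> D. f x < a} = (\<Union>l\<in>{..<a}. \<sigma> l) \<inter> D"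
    proof
      show "{x \<in> D. f x < a} \<subseteq> (\<Union>l\<in>{..<a}. \<sigma> l) \<inter> D"
      proof
        fix x assume x: "x \<in> {x \<in> D. f x < a}"
        hence "x \<in> \<sigma> ((f x + a)/2)" by (intro F2) auto
        moreover have "(f x + a)/2 \<in> {..<a}" using x by auto
        ultimately show "x \<in> (\<Union>l\<in>{..<a}. \<sigma> l) \<inter> D" using x by blast
      qed
      show "(\<Union>l\<in>{..<a}. \<sigma> l) \<inter> D \<subseteq> {x \<in> D. f x < a}"
      proof
        fix x assume "x \<in> (\<Union>l\<in>{..<a}. \<sigma> l) \<inter> D"
        then obtain l where "l < a" "x \<in> \<sigma> l" "x \<in> D" by auto
        thus "x \<in> {x \<in> D. f x < a}" using F1[of x l] by auto
      qed
    qed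
    show "openin T {x \<in> D. f x < a}"
      unfolding opT eq using op openD by (intro conjI openin_Int openin_Union) auto
    have eq2: "{x \<in> D. f x > a} = D - (\<Inter>m\<in>{a<..}. \<sigma> m)"
      using Fle by (auto simp: not_le[symmetric])
    have "closedin X (\<Inter>m\<in>{a<..}. \<sigma> m)"
      by (rule clint) (auto intro: dense)
    thus "openin T {x \<in> D. f x > a}"
      unfolding opT eq2 using openD by (intro conjI openin_diff) auto
  qed
  have eqs: "spectral_family_of T f l = \<sigma> l \<inter> D" for l
  proof
    have S: "spectral_family_of T f l = T interior_of {x \<in> D. f x \<le> l}"
      by (simp add: spectral_family_of_def topT)
    show "\<sigma> l \<inter> D \<subseteq> spectral_family_of T f l"
      unfolding S
    proof (rule interior_of_maximal)
      show "\<sigma> l \<inter> D \<subseteq> {x \<in> D. f x \<le> l}" using F1 by auto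
      show "openin T (\<sigma> l \<inter> D)" unfolding opT using op openD by auto
    qed
    have o: "openin T (spectral_family_of T f l)" unfolding S by simp
    hence oX: "openin X (spectral_family_of T f l)" and sD: "spectral_family_of T f l \<subseteq> D"
      using opT by auto
    have "spectral_family_of T f l \<subseteq> {x \<in> D. f x \<le> l}"
      unfolding S by (rule interior_of_subset)
    hence "spectral_family_of T f l \<subseteq> (\<Inter>m\<in>{l<..}. \<sigma> m)" using Fle by blast
    hence "spectral_family_of T f l \<subseteq> \<sigma> l"
      using interior_of_maximal[OF _ oX] rc[of l] by blast
    thus "spectral_family_of T f l \<subseteq> \<sigma> l \<inter> D" using sD by blast
  qed
  have sfT: "spectral_family T (\<lambda>l. \<sigma> l \<inter> D)"
    unfolding spectral_family_def
  proof (intro conjI allI impI)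
    show "openin T (\<sigma> l \<inter> D)" for l unfolding opT using op openD by auto
    show "\<sigma> l \<inter> D \<subseteq> \<sigma> m \<inter> D" if "l \<le> m" for l m using mono[OF that] by blast
    show "\<sigma> l \<inter> D = T interior_of (\<Inter>m\<in>{l<..}. \<sigma> m \<inter> D)" for l
    proof -
      have "(\<Inter>m\<in>{l<..}. \<sigma> m \<inter> D) = (\<Inter>m\<in>{l<..}. \<sigma> m) \<inter> D" by auto
      hence "T interior_of (\<Inter>m\<in>{l<..}. \<sigma> m \<inter> D) = X interior_of ((\<Inter>m\<in>{l<..}. \<sigma> m) \<inter> D)"
        unfolding T_def by (simp add: interior_of_subtopology_open[OF openD])
      also have "\<dots> = \<sigma> l \<inter> D"
        by (simp add: interior_of_Int interior_of_openin[OF openD] rc[symmetric])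
      finally show ?thesis by simp
    qed
    have "(\<Inter>l. \<sigma> l \<inter> D) = {}" using Ddef by blast
    thus "T interior_of (\<Inter>l. \<sigma> l \<inter> D) = {}" by simp
    show "(\<Union>l. \<sigma> l \<inter> D) = topspace T" using un Dsub topT by blast
  qed
  have eqs': "spectral_family_of T f = (\<lambda>l. \<sigma> l \<inter> D)" using eqs by blast
  show ?thesis
    unfolding D_def[symmetric] f_def[symmetric] T_def[symmetric] eqs'
    using contf sfT by simp
qed
theorem theorem2p37:
  fixes X :: "'a topology"
  assumes "Hausdorff_space X"
  shows "(\<forall>f. continuous_map X euclideanreal f \<longrightarrow>
            continuous_spectral_family X (spectral_family_of X f) \<and>
            admissible_domain X (spectral_family_of X f) = topspace X \<and>
            (\<forall>x\<in>topspace X. induced_function (spectral_family_of X f) x = f x))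
       \<and> (\<forall>\<sigma>. continuous_spectral_family X \<sigma> \<longrightarrow>
            continuous_map (subtopology X (admissible_domain X \<sigma>)) euclideanreal
               (induced_function \<sigma>) \<and>
            spectral_family (subtopology X (admissible_domain X \<sigma>))
               (spectral_family_of (subtopology X (admissible_domain X \<sigma>)) (induced_function \<sigma>)) \<and>
            (\<forall>l. spectral_family_of (subtopology X (admissible_domain X \<sigma>)) (induced_function \<sigma>) l
                  = \<sigma> l \<inter> admissible_domain X \<sigma>))"
  by (intro conjI allI impI partA partB)

end
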